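(* Consider a cellular network with $n$ base stations $\mathcal{N}=\{1,\dots,n\}$, where base station $i$ serves a nonempty set $\mathcal{J}_i$ of users (pairwise disjoint sets), with channel gains $g_{kj}>0$ from base station $k$ to user $j$ and noise power $\sigma^2>0$. For $\mathbf{p}>\mathbf{0}$, $\mathbf{x}\ge\mathbf{0}$, $\mathbf{r}>\mathbf{0}$ define $$\mathrm{SINR}_{ij}(\mathbf{x},\mathbf{p})=\frac{p_i g_{ij}}{\sum_{k\ne i} p_k g_{kj} x_k+\sigma^2},\qquad f_i(\mathbf{x};\mathbf{r},\mathbf{p})=\sum_{j\in\mathcal{J}_i}\frac{r_{ij}}{\log(1+\mathrm{SINR}_{ij}(\mathbf{x},\mathbf{p}))}.$$ Fix a satisfiable rate vector $\mathbf{r}>\mathbf{0}$. If the full load $\mathbf{x}=\mathbf{1}$ is not implementable (for $\mathbf{r}$), then there is no other load $\mathbf{x}\le\mathbf{1}$ with $\mathbf{x}\ne\mathbf{1}$ that is implementable (for $\mathbf{r}$). Consequently, if full load is not implementable for the rate vector $\mathbf{d}_{\min}$, there is no feasible solution for Problem P0: $$\min_{\mathbf{p}>\mathbf{0},\ \mathbf{r}>\mathbf{0},\ \mathbf{0}<\mathbf{x}\le\mathbf{1}} \mathbf{x}^T\mathbf{p}\quad\text{s.t.}\quad \mathbf{x}=\mathbf{f}(\mathbf{x};\mathbf{r},\mathbf{p}),\quad \mathbf{r}\ge\mathbf{d}_{\min},$$ where $\mathbf{d}_{\min}>\mathbf{0}$ is given.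
   Context: Vector inequalities are componentwise; $\log$ is the natural logarithm. A rate vector $\mathbf{r}$ is satisfiable if $\rho(\mathbf{\Lambda}(\mathbf{r}))<1$, where $\rho$ denotes spectral radius and $\mathbf{\Lambda}(\mathbf{r})$ is the $n\times n$ matrix with entries $\lambda_{ii}=0$ and $\lambda_{ik}=\sum_{j\in\mathcal{J}_i} g_{kj}r_{ij}/g_{ij}$ for $i\ne k$. Given a satisfiable $\mathbf{r}$, a load vector $\mathbf{x}>\mathbf{0}$ is implementable if there exists a power vector $\mathbf{p}>\mathbf{0}$ such that $\mathbf{x}=\mathbf{f}(\mathbf{x};\mathbf{r},\mathbf{p})$. *)

theory Defs
  imports Complex_Main "Jordan_Normal_Form.Spectral_Radius"
begin

text \<open>Base stations are indexed by 0..<n; users have an arbitrary type 'u;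
  J i is the user set of station i; g k j is the gain from station k to user j;
  s2 is the noise power sigma^2; vectors are functions nat => real (components i < n);
  rate vectors are functions r i j.\<close>

definition SINR :: "nat \<Rightarrow> (nat \<Rightarrow> 'u \<Rightarrow> real) \<Rightarrow> real \<Rightarrow> (nat \<Rightarrow> real) \<Rightarrow> (nat \<Rightarrow> real)
    \<Rightarrow> nat \<Rightarrow> 'u \<Rightarrow> real" where
  "SINR n g s2 x p i j =
     p i * g i j / ((\<Sum>k\<in>{0..<n} - {i}. p k * g k j * x k) + s2)"

definition load_map :: "nat \<Rightarrow> (nat \<Rightarrow> 'u set) \<Rightarrow> (nat \<Rightarrow> 'u \<Rightarrow> real) \<Rightarrow> real
    \<Rightarrow> (nat \<Rightarrow> real) \<Rightarrow> (nat \<Rightarrow> 'u \<Rightarrow> real) \<Rightarrow> (nat \<Rightarrow> real) \<Rightarrow> nat \<Rightarrow> real" where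
  "load_map n J g s2 x r p i =
     (\<Sum>j\<in>J i. r i j / ln (1 + SINR n g s2 x p i j))"

definition Lambda :: "nat \<Rightarrow> (nat \<Rightarrow> 'u set) \<Rightarrow> (nat \<Rightarrow> 'u \<Rightarrow> real) \<Rightarrow> (nat \<Rightarrow> 'u \<Rightarrow> real)
    \<Rightarrow> complex mat" where
  "Lambda n J g r = mat n n (\<lambda>(i, k). if i = k then 0
      else complex_of_real (\<Sum>j\<in>J i. g k j * r i j / g i j))"

definition satisfiable :: "nat \<Rightarrow> (nat \<Rightarrow> 'u set) \<Rightarrow> (nat \<Rightarrow> 'u \<Rightarrow> real) \<Rightarrow> (nat \<Rightarrow> 'u \<Rightarrow> real)
    \<Rightarrow> bool" where
  "satisfiable n J g r \<longleftrightarrow> spectral_radius (Lambda n J g r) < 1"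

definition implementable :: "nat \<Rightarrow> (nat \<Rightarrow> 'u set) \<Rightarrow> (nat \<Rightarrow> 'u \<Rightarrow> real) \<Rightarrow> real
    \<Rightarrow> (nat \<Rightarrow> 'u \<Rightarrow> real) \<Rightarrow> (nat \<Rightarrow> real) \<Rightarrow> bool" where
  "implementable n J g s2 r x \<longleftrightarrow>
     (\<forall>i<n. 0 < x i) \<and>
     (\<exists>p. (\<forall>i<n. 0 < p i) \<and> (\<forall>i<n. x i = load_map n J g s2 x r p i))"

end

theory Submission
  imports Defs "HOL-Analysis.Convex"
begin

lemma ln_conc:
  fixes c a :: real
  assumes "0 \<le> c" "c \<le> 1" "0 \<le> a"
  shows "c * ln (1 + a) \<le> ln (1 + c * a)"
proof -
  have "(1 - c) * ln 1 + c * ln (1 + a) \<le> ln ((1 - c) *\<^sub>R 1 + c *\<^sub>R (1 + a))"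
    using concave_onD[OF ln_concave, of c 1 "1 + a"] assms by simp
  moreover have "(1 - c) *\<^sub>R 1 + c *\<^sub>R (1 + a) = 1 + c * a"
    by (simp add: algebra_simps)
  ultimately show ?thesis by (simp only: ln_one mult_zero_right add_0)
qed

lemma recip_conc:
  fixes c a r :: real
  assumes "0 < c" "c \<le> 1" "0 < a" "0 \<le> r"
  shows "r / ln (1 + c * a) \<le> r / (c * ln (1 + a))"
proof -
  have "0 < c * ln (1 + a)" using assms by simp
  moreover have "c * ln (1 + a) \<le> ln (1 + c * a)" using ln_conc assms by simp
  moreover have "0 < ln (1 + c * a)" using assms by (intro ln_gt_zero) simp
  ultimately show ?thesis using assms by (intro divide_left_mono) auto
qed

context
  fixes n :: nat and J :: "nat \<Rightarrow> 'u set" and g :: "nat \<Rightarrow> 'u \<Rightarrow> real" and s2 :: real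
    and d :: "nat \<Rightarrow> 'u \<Rightarrow> real"
  assumes J_fin: "\<And>i. i < n \<Longrightarrow> finite (J i)"
    and J_ne: "\<And>i. i < n \<Longrightarrow> J i \<noteq> {}"
    and g_pos: "\<And>k i j. k < n \<Longrightarrow> i < n \<Longrightarrow> j \<in> J i \<Longrightarrow> 0 < g k j"
    and s2_pos: "0 < s2"
    and d_pos: "\<And>i j. i < n \<Longrightarrow> j \<in> J i \<Longrightarrow> 0 < d i j"
begin

lemma interf_nonneg:
  assumes "\<forall>k<n. 0 \<le> q k" "i < n" "j \<in> J i"
  shows "0 \<le> (\<Sum>k\<in>{0..<n} - {i}. q k * g k j * 1)"
proof -
  have "\<And>k. k < n \<Longrightarrow> 0 \<le> g k j" using g_pos assms by (simp add: less_imp_le)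
  then show ?thesis using assms by (intro sum_nonneg) auto
qed

lemma SINR_pos:
  assumes "\<forall>k<n. 0 < q k" "i < n" "j \<in> J i"
  shows "0 < SINR n g s2 (\<lambda>_. 1) q i j"
proof -
  have "0 \<le> (\<Sum>k\<in>{0..<n} - {i}. q k * g k j * 1)"
    using interf_nonneg assms by (simp add: less_imp_le)
  then show ?thesis using assms g_pos s2_pos unfolding SINR_def by simp
qed

lemma lm_pos:
  assumes "\<forall>k<n. 0 < q k" "i < n"
  shows "0 < load_map n J g s2 (\<lambda>_. 1) d q i"
  unfolding load_map_def
proof (rule sum_pos)
  show "finite (J i)" using J_fin assms by simp
  show "J i \<noteq> {}" using J_ne assms by simp
  fix j assume "j \<in> J i"
  then show "0 < d i j / ln (1 + SINR n g s2 (\<lambda>_. 1) q i j)"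
    using SINR_pos[OF assms \<open>j \<in> J i\<close>] d_pos assms by simp
qed

lemma lm_mono:
  assumes i: "i < n" and qi: "0 < q' i" "q' i \<le> q i"
    and others: "\<forall>k<n. k \<noteq> i \<longrightarrow> 0 \<le> q k \<and> q k \<le> q' k"
  shows "load_map n J g s2 (\<lambda>_. 1) d q i \<le> load_map n J g s2 (\<lambda>_. 1) d q' i"
  unfolding load_map_def
proof (rule sum_mono)
  fix j assume j: "j \<in> J i"
  define I where "I = (\<Sum>k\<in>{0..<n} - {i}. q k * g k j * 1)"
  define I' where "I' = (\<Sum>k\<in>{0..<n} - {i}. q' k * g k j * 1)"
  have gk: "\<And>k. k < n \<Longrightarrow> 0 \<le> g k j" using g_pos i j by (simp add: less_imp_le)
  have I0: "0 \<le> I" unfolding I_def using others gk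
    by (intro sum_nonneg) auto
  have II: "I \<le> I'" unfolding I_def I'_def using others g_pos i j
    by (intro sum_mono) (auto intro!: mult_right_mono less_imp_le)
  have gij: "0 < g i j" using g_pos i j by simp
  have s1: "q' i * g i j / (I' + s2) \<le> q i * g i j / (I + s2)"
    using I0 II gij qi s2_pos
    by (intro frac_le) (auto intro!: mult_right_mono)
  have s0: "0 < q' i * g i j / (I' + s2)" using I0 II gij qi s2_pos by simp
  have "ln (1 + q' i * g i j / (I' + s2)) \<le> ln (1 + q i * g i j / (I + s2))"
    using s0 s1 by simp
  moreover have "0 < ln (1 + q' i * g i j / (I' + s2))" using s0 by simp
  ultimately have "d i j / ln (1 + q i * g i j / (I + s2)) \<le> d i j / ln (1 + q' i * g i j / (I' + s2))"
    using d_pos i j by (intro divide_left_mono) (auto intro: less_imp_le)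
  then show "d i j / ln (1 + SINR n g s2 (\<lambda>_. 1) q i j) \<le> d i j / ln (1 + SINR n g s2 (\<lambda>_. 1) q' i j)"
    unfolding SINR_def I_def I'_def by simp
qed

lemma lm_scale:
  assumes i: "i < n" and c: "1 \<le> c" and q: "\<forall>k<n. 0 < q k"
  shows "load_map n J g s2 (\<lambda>_. 1) d (q(i := q i / c)) i \<le> c * load_map n J g s2 (\<lambda>_. 1) d q i"
  unfolding load_map_def sum_distrib_left
proof (rule sum_mono)
  fix j assume j: "j \<in> J i"
  define a where "a = SINR n g s2 (\<lambda>_. 1) q i j"
  have a0: "0 < a" unfolding a_def using SINR_pos q i j by simp
  have sumeq: "(\<Sum>k\<in>{0..<n} - {i}. (q(i := q i / c)) k * g k j * 1) = (\<Sum>k\<in>{0..<n} - {i}. q k * g k j * 1)"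
    by (rule sum.cong) auto
  have e1: "SINR n g s2 (\<lambda>_. 1) (q(i := q i / c)) i j = (1 / c) * a"
    unfolding SINR_def a_def sumeq by simp
  have e2: "d i j / ln (1 + (1 / c) * a) \<le> d i j / ((1 / c) * ln (1 + a))"
    using recip_conc[of "1/c" a "d i j"] c a0 d_pos i j by (simp add: less_imp_le)
  have e3: "d i j / ((1 / c) * ln (1 + a)) = c * (d i j / ln (1 + a))"
    using c by simp
  show "d i j / ln (1 + SINR n g s2 (\<lambda>_. 1) (q(i := q i / c)) i j)
      \<le> c * (d i j / ln (1 + SINR n g s2 (\<lambda>_. 1) q i j))"
    unfolding e1 a_def[symmetric] using order_trans[OF e2 eq_refl[OF e3]] .
qed

lemma lm_lower:
  assumes i: "i < n"
  shows "\<exists>e>0. \<forall>q. (\<forall>k<n. 0 < q k) \<longrightarrow> load_map n J g s2 (\<lambda>_. 1) d q i \<le> 1 \<longrightarrow> e \<le> q i"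
proof -
  obtain j where j: "j \<in> J i" using J_ne i by blast
  have gij: "0 < g i j" using g_pos i j by simp
  have dij: "0 < d i j" using d_pos i j by simp
  define e where "e = s2 * (exp (d i j) - 1) / g i j"
  have "0 < e" unfolding e_def using s2_pos gij dij by (simp add: field_simps)
  moreover have "e \<le> q i" if q: "\<forall>k<n. 0 < q k" and le: "load_map n J g s2 (\<lambda>_. 1) d q i \<le> 1" for q
  proof -
    define I where "I = (\<Sum>k\<in>{0..<n} - {i}. q k * g k j * 1)"
    have I0: "0 \<le> I" unfolding I_def using interf_nonneg q i j by (simp add: less_imp_le)
    define a where "a = SINR n g s2 (\<lambda>_. 1) q i j"
    have a0: "0 < a" unfolding a_def using SINR_pos q i j by simp
    have lnpos: "\<And>x. x \<in> J i \<Longrightarrow> 0 < ln (1 + SINR n g s2 (\<lambda>_. 1) q i x)"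
    proof -
      fix x assume "x \<in> J i"
      then have "0 < SINR n g s2 (\<lambda>_. 1) q i x" using SINR_pos[OF q i] by simp
      then show "0 < ln (1 + SINR n g s2 (\<lambda>_. 1) q i x)" by (intro ln_gt_zero) simp
    qed
    have "d i j / ln (1 + a) \<le> load_map n J g s2 (\<lambda>_. 1) d q i"
      unfolding load_map_def a_def
      using J_fin i j lnpos d_pos i
      by (intro member_le_sum) (auto intro!: divide_nonneg_pos less_imp_le)
    with le have "d i j / ln (1 + a) \<le> 1" by simp
    moreover have "0 < ln (1 + a)" using a0 by simp
    ultimately have "d i j \<le> ln (1 + a)" by (simp add: divide_le_eq)
    then have "exp (d i j) \<le> exp (ln (1 + a))" by simp
    also have "\<dots> = 1 + a" using a0 by simp
    finally have "exp (d i j) \<le> 1 + a" .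
    moreover have "a \<le> q i * g i j / s2"
      unfolding a_def SINR_def I_def[symmetric] using I0 s2_pos gij q i
      by (intro divide_left_mono) (auto intro!: mult_nonneg_nonneg less_imp_le)
    ultimately have "exp (d i j) - 1 \<le> q i * g i j / s2" by simp
    then have "s2 * (exp (d i j) - 1) \<le> q i * g i j" using s2_pos by (simp add: field_simps)
    then show ?thesis unfolding e_def using gij by (simp add: field_simps)
  qed
  ultimately show ?thesis by blast
qed

lemma key:
  assumes q0: "\<forall>k<n. 0 < q0 k" "\<forall>i<n. load_map n J g s2 (\<lambda>_. 1) d q0 i \<le> 1"
  shows "\<exists>p. (\<forall>i<n. 0 < p i) \<and> (\<forall>i<n. 1 = load_map n J g s2 (\<lambda>_. 1) d p i)"
proof -
  define F where "F q i = load_map n J g s2 (\<lambda>_. 1) d q i" for q i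
  define S where "S = {q. (\<forall>k<n. 0 < q k) \<and> (\<forall>i<n. F q i \<le> 1)}"
  define qs where "qs i = Inf ((\<lambda>q. q i) ` S)" for i
  have q0S: "q0 \<in> S" using q0 unfolding S_def F_def by simp
  have bdd: "bdd_below ((\<lambda>q. q i) ` S)" if "i < n" for i
    using that unfolding S_def bdd_below_def by (auto intro!: exI[of _ 0] less_imp_le)
  have qs_le: "qs i \<le> q i" if "q \<in> S" "i < n" for q i
    unfolding qs_def using that bdd by (intro cInf_lower) auto
  have qs_pos: "0 < qs i" if i: "i < n" for i
  proof -
    obtain e where e: "e > 0" "\<forall>q. (\<forall>k<n. 0 < q k) \<longrightarrow> F q i \<le> 1 \<longrightarrow> e \<le> q i"
      using lm_lower[OF i] unfolding F_def by blast
    have "e \<le> qs i" unfolding qs_def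
      using q0S e i by (intro cInf_greatest) (auto simp: S_def)
    then show ?thesis using e by simp
  qed
  have minS: "(\<lambda>k. min (q k) (q' k)) \<in> S" if "q \<in> S" "q' \<in> S" for q q'
  proof -
    have pos: "\<forall>k<n. 0 < min (q k) (q' k)" using that unfolding S_def by auto
    have "F (\<lambda>k. min (q k) (q' k)) i \<le> 1" if i: "i < n" for i
    proof (cases "q i \<le> q' i")
      case True
      have "F (\<lambda>k. min (q k) (q' k)) i \<le> F q i" unfolding F_def
        using True pos i \<open>q \<in> S\<close> by (intro lm_mono) (auto simp: S_def less_imp_le)
      then show ?thesis using \<open>q \<in> S\<close> i unfolding S_def by force
    next
      case False
      have "F (\<lambda>k. min (q k) (q' k)) i \<le> F q' i" unfolding F_def
        using False pos i \<open>q' \<in> S\<close> by (intro lm_mono) (auto simp: S_def less_imp_le)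
      then show ?thesis using \<open>q' \<in> S\<close> i unfolding S_def by force
    qed
    then show ?thesis using pos unfolding S_def by simp
  qed
  have approx: "\<exists>m\<in>S. \<forall>k<n. m k < qs k * (1 + \<delta>)" if dl: "0 < \<delta>" for \<delta>
  proof -
    have "finite K \<Longrightarrow> K \<subseteq> {0..<n} \<Longrightarrow> \<exists>m\<in>S. \<forall>k\<in>K. m k < qs k * (1 + \<delta>)" for K
    proof (induction K rule: finite_induct)
      case empty then show ?case using q0S by blast
    next
      case (insert k K)
      then obtain m where m: "m \<in> S" "\<forall>k\<in>K. m k < qs k * (1 + \<delta>)" by auto
      have k: "k < n" using insert by auto
      have "qs k < qs k * (1 + \<delta>)" using qs_pos[OF k] dl by simp
      then have "Inf ((\<lambda>q. q k) ` S) < qs k * (1 + \<delta>)" unfolding qs_def by simp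
      then obtain q where q: "q \<in> S" "q k < qs k * (1 + \<delta>)"
        using cInf_less_iff[OF _ bdd[OF k]] q0S by auto
      show ?case
        using minS[OF m(1) q(1)] m q by (intro bexI[of _ "\<lambda>k. min (m k) (q k)"]) auto
    qed
    from this[of "{0..<n}"] obtain m where "m \<in> S" "\<forall>k\<in>{0..<n}. m k < qs k * (1 + \<delta>)" by auto
    then show ?thesis by (intro bexI[of _ m]) auto
  qed
  have qs_posall: "\<forall>k<n. 0 < qs k" using qs_pos by simp
  have Fqs: "F qs i \<le> 1" if i: "i < n" for i
  proof (rule field_le_epsilon)
    fix \<delta> :: real assume dl: "0 < \<delta>"
    obtain m where m: "m \<in> S" "\<forall>k<n. m k < qs k * (1 + \<delta>)" using approx[OF dl] by blast
    have mpos: "\<forall>k<n. 0 < m k" using m unfolding S_def by simp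
    have "F qs i \<le> F (m(i := m i / (1 + \<delta>))) i" unfolding F_def
    proof (rule lm_mono[OF i])
      show "0 < (m(i := m i / (1 + \<delta>))) i" using mpos i dl by simp
      show "(m(i := m i / (1 + \<delta>))) i \<le> qs i" using m(2) i dl qs_pos[OF i]
        by (simp add: divide_le_eq mult.commute less_imp_le)
      show "\<forall>k<n. k \<noteq> i \<longrightarrow> 0 \<le> qs k \<and> qs k \<le> (m(i := m i / (1 + \<delta>))) k"
        using qs_pos qs_le[OF m(1)] by (auto intro: less_imp_le)
    qed
    also have "\<dots> \<le> (1 + \<delta>) * F m i" unfolding F_def
      using lm_scale[OF i _ mpos, of "1 + \<delta>"] dl by simp
    also have "\<dots> \<le> (1 + \<delta>) * 1" using m(1) i dl unfolding S_def
      by (intro mult_left_mono) auto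
    finally show "F qs i \<le> 1 + \<delta>" by simp
  qed
  have qsS: "qs \<in> S" using Fqs qs_posall unfolding S_def by simp
  have "1 = F qs i" if i: "i < n" for i
  proof (rule ccontr)
    assume "1 \<noteq> F qs i"
    then have lt: "F qs i < 1" using Fqs[OF i] by simp
    have Fp: "0 < F qs i" unfolding F_def using lm_pos qs_posall i by simp
    define c where "c = 1 / F qs i"
    have c1: "1 < c" unfolding c_def using lt Fp by simp
    define q' where "q' = qs(i := qs i / c)"
    have q'pos: "\<forall>k<n. 0 < q' k" unfolding q'_def using qs_posall c1 by simp
    have "F q' k \<le> 1" if k: "k < n" for k
    proof (cases "k = i")
      case True
      have "F q' i \<le> c * F qs i" unfolding F_def q'_def
        using lm_scale[OF i _ qs_posall, of c] c1 by simp
      also have "\<dots> = 1" unfolding c_def using Fp by simp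
      finally show ?thesis using True by simp
    next
      case False
      have "F q' k \<le> F qs k" unfolding F_def
      proof (rule lm_mono[OF k])
        show "0 < qs k" using qs_posall k by simp
        show "qs k \<le> q' k" unfolding q'_def using False by simp
        show "\<forall>ka<n. ka \<noteq> k \<longrightarrow> 0 \<le> q' ka \<and> q' ka \<le> qs ka"
          using q'pos c1 qs_posall unfolding q'_def
          by (auto simp: divide_le_eq less_imp_le mult_le_cancel_left1)
      qed
      then show ?thesis using Fqs[OF k] by simp
    qed
    then have "q' \<in> S" using q'pos unfolding S_def by simp
    then have "qs i \<le> qs i / c" using qs_le i unfolding q'_def by force
    moreover have "qs i / c < qs i" using c1 qs_posall i by (simp add: divide_less_eq)
    ultimately show False by simp
  qed
  then show ?thesis using qs_posall unfolding F_def by blast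
qed


lemma from_impl:
  assumes r: "\<forall>i<n. \<forall>j\<in>J i. d i j \<le> r i j"
    and x: "\<forall>i<n. 0 < x i \<and> x i \<le> 1"
    and p: "\<forall>i<n. 0 < p i"
    and fx: "\<forall>i<n. x i = load_map n J g s2 x r p i"
  shows "\<exists>p'. (\<forall>i<n. 0 < p' i) \<and> (\<forall>i<n. 1 = load_map n J g s2 (\<lambda>_. 1) d p' i)"
proof -
  define q where "q k = p k * x k" for k
  have qpos: "\<forall>k<n. 0 < q k" unfolding q_def using p x by simp
  have "load_map n J g s2 (\<lambda>_. 1) d q i \<le> 1" if i: "i < n" for i
  proof -
    have xi: "0 < x i" "x i \<le> 1" using x i by auto
    have "load_map n J g s2 (\<lambda>_. 1) d q i \<le> (\<Sum>j\<in>J i. r i j / ln (1 + SINR n g s2 x p i j) / x i)"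
      unfolding load_map_def
    proof (rule sum_mono)
      fix j assume j: "j \<in> J i"
      define a where "a = SINR n g s2 x p i j"
      have sumeq: "(\<Sum>k\<in>{0..<n} - {i}. q k * g k j * 1) = (\<Sum>k\<in>{0..<n} - {i}. p k * g k j * x k)"
        unfolding q_def by (intro sum.cong) (auto simp: mult_ac)
      have gk: "\<And>k. k < n \<Longrightarrow> 0 \<le> g k j" using g_pos i j by (simp add: less_imp_le)
      have I0: "0 \<le> (\<Sum>k\<in>{0..<n} - {i}. p k * g k j * x k)"
      proof (intro sum_nonneg)
        fix k assume "k \<in> {0..<n} - {i}"
        then have "0 \<le> p k" "0 \<le> g k j" "0 \<le> x k" using p x gk by (auto simp: less_imp_le)
        then show "0 \<le> p k * g k j * x k" by simp
      qed
      have gij: "0 < g i j" using g_pos i j by simp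
      have a0: "0 < a" unfolding a_def SINR_def using I0 gij p i s2_pos by simp
      have e1: "SINR n g s2 (\<lambda>_. 1) q i j = x i * a"
        unfolding SINR_def a_def sumeq by (simp add: q_def mult_ac)
      have dij: "0 < d i j" "d i j \<le> r i j" using d_pos r i j by auto
      have l0: "0 < ln (1 + x i * a)" using xi a0 by (intro ln_gt_zero) simp
      have "d i j / ln (1 + x i * a) \<le> r i j / ln (1 + x i * a)"
        using dij l0 by (intro divide_right_mono) auto
      also have "\<dots> \<le> r i j / (x i * ln (1 + a))"
        using recip_conc[of "x i" a "r i j"] xi a0 dij by simp
      also have "\<dots> = r i j / ln (1 + a) / x i" by simp
      finally show "d i j / ln (1 + SINR n g s2 (\<lambda>_. 1) q i j) \<le> r i j / ln (1 + SINR n g s2 x p i j) / x i"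
        unfolding e1 a_def[symmetric] .
    qed
    also have "\<dots> = load_map n J g s2 x r p i / x i"
      unfolding load_map_def by (simp add: sum_divide_distrib)
    also have "\<dots> = 1" using fx i xi by simp
    finally show ?thesis .
  qed
  then show ?thesis using key qpos by blast
qed

end

lemma impl_full:
  assumes J_fin: "\<And>i. i < n \<Longrightarrow> finite (J i)"
    and J_ne: "\<And>i. i < n \<Longrightarrow> J i \<noteq> {}"
    and g_pos: "\<And>k i j. k < n \<Longrightarrow> i < n \<Longrightarrow> j \<in> J i \<Longrightarrow> 0 < g k j"
    and s2_pos: "0 < s2"
    and d_pos: "\<forall>i<n. \<forall>j\<in>J i. 0 < d i j"
    and r: "\<forall>i<n. \<forall>j\<in>J i. d i j \<le> r i j"
    and x: "\<forall>i<n. 0 < x i \<and> x i \<le> 1"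
    and p: "\<forall>i<n. 0 < p i"
    and fx: "\<forall>i<n. x i = load_map n J g s2 x r p i"
  shows "implementable n J g s2 d (\<lambda>_. 1)"
proof -
  have dp: "\<And>i j. i < n \<Longrightarrow> j \<in> J i \<Longrightarrow> 0 < d i j" using d_pos by simp
  show ?thesis
    using from_impl[OF J_fin J_ne g_pos s2_pos dp r x p fx] unfolding implementable_def by simp
qed

theorem corollary1:
  fixes n :: nat and J :: "nat \<Rightarrow> 'u set" and g :: "nat \<Rightarrow> 'u \<Rightarrow> real" and s2 :: real
  assumes n_pos: "1 \<le> n"
    and J_fin: "\<And>i. i < n \<Longrightarrow> finite (J i)"
    and J_ne: "\<And>i. i < n \<Longrightarrow> J i \<noteq> {}"
    and J_disj: "\<And>i k. i < n \<Longrightarrow> k < n \<Longrightarrow> i \<noteq> k \<Longrightarrow> J i \<inter> J k = {}"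
    and g_pos: "\<And>k i j. k < n \<Longrightarrow> i < n \<Longrightarrow> j \<in> J i \<Longrightarrow> 0 < g k j"
    and s2_pos: "0 < s2"
  shows
    "(\<forall>r. (\<forall>i<n. \<forall>j\<in>J i. 0 < r i j) \<longrightarrow> satisfiable n J g r \<longrightarrow>
          \<not> implementable n J g s2 r (\<lambda>_. 1) \<longrightarrow>
          (\<forall>x. (\<forall>i<n. x i \<le> 1) \<longrightarrow> (\<exists>i<n. x i \<noteq> 1) \<longrightarrow>
               \<not> implementable n J g s2 r x))
     \<and>
     (\<forall>dmin. (\<forall>i<n. \<forall>j\<in>J i. 0 < dmin i j) \<longrightarrow> satisfiable n J g dmin \<longrightarrow>
          \<not> implementable n J g s2 dmin (\<lambda>_. 1) \<longrightarrow>
          \<not> (\<exists>p r x. (\<forall>i<n. 0 < p i) \<and> (\<forall>i<n. \<forall>j\<in>J i. 0 < r i j \<and> dmin i j \<le> r i j)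
                 \<and> (\<forall>i<n. 0 < x i \<and> x i \<le> 1)
                 \<and> (\<forall>i<n. x i = load_map n J g s2 x r p i)))"
proof (intro conjI allI impI notI)
  fix r x
  assume rpos: "\<forall>i<n. \<forall>j\<in>J i. 0 < r i j" and nfull: "\<not> implementable n J g s2 r (\<lambda>_. 1)"
    and xle: "\<forall>i<n. x i \<le> 1" and imp: "implementable n J g s2 r x"
  from imp obtain p where x0: "\<forall>i<n. 0 < x i" and p: "\<forall>i<n. 0 < p i"
    and fx: "\<forall>i<n. x i = load_map n J g s2 x r p i"
    unfolding implementable_def by blast
  have "implementable n J g s2 r (\<lambda>_. 1)"
    by (rule impl_full[OF J_fin J_ne g_pos s2_pos rpos _ _ p fx]) (use x0 xle in auto)
  with nfull show False by simp
next
  fix dmin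
  assume dpos: "\<forall>i<n. \<forall>j\<in>J i. 0 < dmin i j" and nfull: "\<not> implementable n J g s2 dmin (\<lambda>_. 1)"
    and ex: "\<exists>p r x. (\<forall>i<n. 0 < p i) \<and> (\<forall>i<n. \<forall>j\<in>J i. 0 < r i j \<and> dmin i j \<le> r i j)
                 \<and> (\<forall>i<n. 0 < x i \<and> x i \<le> 1)
                 \<and> (\<forall>i<n. x i = load_map n J g s2 x r p i)"
  then obtain p r x where p: "\<forall>i<n. 0 < p i" and r: "\<forall>i<n. \<forall>j\<in>J i. 0 < r i j \<and> dmin i j \<le> r i j"
    and x: "\<forall>i<n. 0 < x i \<and> x i \<le> 1" and fx: "\<forall>i<n. x i = load_map n J g s2 x r p i"
    by blast
  have "implementable n J g s2 dmin (\<lambda>_. 1)"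
    by (rule impl_full[OF J_fin J_ne g_pos s2_pos dpos _ x p fx]) (use r in auto)
  with nfull show False by simp
qed

end
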